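(* Let $X$ be any topological space and let $Y$ be a topological space such that $\hat{c}(Y^\omega) > \pi w(Y) \geq \pi w(X)$. Then for every cardinal $\mu$ with $\omega \leq \mu \leq \pi w(X)$, the product space $X \times Y^\mu$ (with the Tychonoff product topology) has a $\sigma$-disjoint $\pi$-base.
   Context: All spaces are Hausdorff. A $\pi$-base for a space $Z$ is a family $\mathcal{P}$ of non-empty open subsets of $Z$ such that every non-empty open $U \subseteq Z$ contains some $P \in \mathcal{P}$; $\pi w(Z)$ is the minimum cardinality of a $\pi$-base of $Z$. A $\pi$-base is $\sigma$-disjoint if it is a countable union of families each consisting of pairwise disjoint sets. A cellular family in $Z$ is a family of pairwise disjoint non-empty open subsets of $Z$. $\hat{c}(Z)$ denotes the least cardinal $\kappa$ such that $Z$ has no cellular family of cardinality $\kappa$. *)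

theory Defs
  imports "HOL-Analysis.Analysis"
begin

definition pi_base :: "'a topology \<Rightarrow> 'a set set \<Rightarrow> bool" where
  "pi_base Z P \<longleftrightarrow>
     (\<forall>B\<in>P. openin Z B \<and> B \<noteq> {}) \<and>
     (\<forall>U. openin Z U \<and> U \<noteq> {} \<longrightarrow> (\<exists>B\<in>P. B \<subseteq> U))"

text \<open>A pi-base of minimum cardinality; its cardinality is the pi-weight of Z.\<close>
definition min_pi_base :: "'a topology \<Rightarrow> 'a set set \<Rightarrow> bool" where
  "min_pi_base Z P \<longleftrightarrow> pi_base Z P \<and> (\<forall>Q. pi_base Z Q \<longrightarrow> (card_of P, card_of Q) \<in> ordLeq)"

definition sigma_disjoint :: "'a set set \<Rightarrow> bool" where
  "sigma_disjoint P \<longleftrightarrow>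
     (\<exists>F :: nat \<Rightarrow> 'a set set. P = (\<Union>n. F n) \<and> (\<forall>n. pairwise disjnt (F n)))"

definition cellular :: "'a topology \<Rightarrow> 'a set set \<Rightarrow> bool" where
  "cellular Z C \<longleftrightarrow> (\<forall>B\<in>C. openin Z B \<and> B \<noteq> {}) \<and> pairwise disjnt C"

text \<open>chat_greater Z A means c-hat(Z) > |A|: every cardinal kappa <= |A| (i.e. the
  cardinality of some subset of A) is the cardinality of a cellular family in Z.\<close>
definition chat_greater :: "'a topology \<Rightarrow> 'b set \<Rightarrow> bool" where
  "chat_greater Z A \<longleftrightarrow> (\<forall>K. K \<subseteq> A \<longrightarrow> (\<exists>C. cellular Z C \<and> (card_of C, card_of K) \<in> ordIso))"

end

theory Submission imports Defs begin
unbundle cardinal_syntax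

lemma lists_len_card:
  assumes "infinite A"
  shows "|{xs \<in> lists A. length xs = k}| \<le>o |A|"
proof (induction k)
  case 0
  have "{xs \<in> lists A. length xs = 0} = {[]}" by auto
  moreover have "A \<noteq> {}" using assms by auto
  ultimately show ?case using card_of_singl_ordLeq by metis
next
  case (Suc k)
  have "{xs \<in> lists A. length xs = Suc k} \<subseteq> (\<lambda>(a,xs). a#xs) ` (A \<times> {xs \<in> lists A. length xs = k})"
    by (auto simp: length_Suc_conv image_iff)
  then have "|{xs \<in> lists A. length xs = Suc k}| \<le>o |A \<times> {xs \<in> lists A. length xs = k}|"
    by (rule surj_imp_ordLeq)
  moreover have "|A \<times> {xs \<in> lists A. length xs = k}| \<le>o |A \<times> A|"
    using Suc card_of_Times_mono2 by blast
  moreover have "|A \<times> A| =o |A|" using assms card_of_Times_same_infinite by blast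
  ultimately show ?case using ordLeq_transitive ordLeq_ordIso_trans by blast
qed

lemma lists_card:
  assumes "infinite A"
  shows "|lists A| \<le>o |A|"
proof -
  have "lists A = (\<Union>k\<in>UNIV. {xs \<in> lists A. length xs = k})" by auto
  moreover have "|\<Union>k\<in>(UNIV::nat set). {xs \<in> lists A. length xs = k}| \<le>o |A|"
    apply (rule card_of_UNION_ordLeq_infinite)
    using assms infinite_iff_card_of_nat lists_len_card by blast+
  ultimately show ?thesis by simp
qed

lemma box_open:
  assumes "set xs \<subseteq> I \<times> Q" "\<forall>q\<in>Q. openin Y q"
  shows "openin (product_topology (\<lambda>_. Y) I)
     {x \<in> topspace (product_topology (\<lambda>_. Y) I). \<forall>(i,q)\<in>set xs. x i \<in> q}"
  using assms
proof (induction xs)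
  case Nil
  then show ?case using openin_topspace[of "product_topology (\<lambda>_. Y) I"] by simp
next
  case (Cons a xs)
  obtain i q where a: "a = (i,q)" by force
  have "i \<in> I" "openin Y q" using Cons.prems a by auto
  then have o1: "openin (product_topology (\<lambda>_. Y) I) {x \<in> topspace (product_topology (\<lambda>_. Y) I). x i \<in> q}"
    by (intro openin_continuous_map_preimage[OF continuous_map_product_projection[of i I "\<lambda>_. Y"]])
  have "{x \<in> topspace (product_topology (\<lambda>_. Y) I). \<forall>(i,q)\<in>set (a#xs). x i \<in> q}
     = {x \<in> topspace (product_topology (\<lambda>_. Y) I). x i \<in> q} \<inter> {x \<in> topspace (product_topology (\<lambda>_. Y) I). \<forall>(i,q)\<in>set xs. x i \<in> q}"
    using a by auto
  then show ?case using o1 Cons by (simp add: openin_Int)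
qed

lemma cyl_open:
  assumes "range j \<subseteq> I" "openin (product_topology (\<lambda>_::nat. Y) UNIV) c"
  shows "openin (product_topology (\<lambda>_. Y) I)
     {x \<in> topspace (product_topology (\<lambda>_. Y) I). (\<lambda>m. x (j m)) \<in> c}"
proof (rule openin_continuous_map_preimage[OF _ assms(2)])
  show "continuous_map (product_topology (\<lambda>_. Y) I) (product_topology (\<lambda>_::nat. Y) UNIV) (\<lambda>x m. x (j m))"
    unfolding continuous_map_componentwise_UNIV
    using assms(1) by (auto intro: continuous_map_product_projection)
qed

theorem lemma2:
  fixes X :: "'a topology" and Y :: "'b topology" and I :: "'i set"
    and PX :: "'a set set" and PY :: "'b set set"
  assumes "Hausdorff_space X" and "Hausdorff_space Y"
    and "min_pi_base X PX" and "min_pi_base Y PY"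
    and "chat_greater (product_topology (\<lambda>_::nat. Y) UNIV) PY"
    and "(card_of PX, card_of PY) \<in> ordLeq"
    and "infinite I" and "(card_of I, card_of PX) \<in> ordLeq"
  shows "\<exists>P. pi_base (prod_topology X (product_topology (\<lambda>_. Y) I)) P \<and> sigma_disjoint P"
proof -
  define T where "T = product_topology (\<lambda>_. Y) I"
  have PXb: "pi_base X PX" and PYb: "pi_base Y PY" using assms(3,4) by (auto simp: min_pi_base_def)
  have IPX: "|I| \<le>o |PX|" and PXPY: "|PX| \<le>o |PY|" using assms(6,8) by auto
  have infPX: "infinite PX" using card_of_ordLeq_finite[OF IPX] assms(7) by blast
  have infPY: "infinite PY" using card_of_ordLeq_finite[OF PXPY] infPX by blast
  have IPY: "|I| \<le>o |PY|" using IPX PXPY ordLeq_transitive by blast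
  obtain C where Ccell: "cellular (product_topology (\<lambda>_::nat. Y) UNIV) C" and CPY: "|C| =o |PY|"
    using assms(5)[unfolded chat_greater_def, rule_format, OF order_refl] by (elim exE conjE)
  define box where "box xs = {x \<in> topspace T. \<forall>(i,q)\<in>set xs. x i \<in> q}" for xs :: "('i \<times> 'b set) list"
  define Idx where "Idx = {(W, xs). W \<in> PX \<and> xs \<in> lists (I \<times> PY) \<and> box xs \<noteq> {}}"
  have "|Idx| \<le>o |PX \<times> lists (I \<times> PY)|"
    by (rule card_of_mono1) (auto simp: Idx_def)
  moreover have "|lists (I \<times> PY)| \<le>o |I \<times> PY|"
  proof -
    have "PY \<noteq> {}" using infPY by auto
    then have "infinite (I \<times> PY)" using assms(7) finite_cartesian_productD1 by blast
    then show ?thesis by (rule lists_card)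
  qed
  moreover have "|I \<times> PY| \<le>o |PY \<times> PY|" using IPY card_of_Times_mono1 by blast
  moreover have PP: "|PY \<times> PY| =o |PY|" using infPY card_of_Times_same_infinite by blast
  ultimately have LP: "|lists (I \<times> PY)| \<le>o |PY|" and "|Idx| \<le>o |PX \<times> lists (I \<times> PY)|"
    using ordLeq_transitive ordLeq_ordIso_trans by blast+
  moreover have "|PX \<times> lists (I \<times> PY)| \<le>o |PY \<times> PY|"
  proof -
    have "|PX \<times> lists (I \<times> PY)| \<le>o |PY \<times> lists (I \<times> PY)|" using PXPY by (rule card_of_Times_mono1)
    moreover have "|PY \<times> lists (I \<times> PY)| \<le>o |PY \<times> PY|" using LP by (rule card_of_Times_mono2)
    ultimately show ?thesis by (rule ordLeq_transitive)
  qed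
  ultimately have "|Idx| \<le>o |PY|" using PP ordLeq_transitive ordLeq_ordIso_trans by blast
  then have "|Idx| \<le>o |C|" using CPY ordIso_symmetric ordLeq_ordIso_trans by blast
  then obtain g where ginj: "inj_on g Idx" and gC: "g ` Idx \<subseteq> C"
    using card_of_ordLeq[of Idx C] by metis
  obtain e :: "nat \<Rightarrow> 'i" where einj: "inj e" and eI: "range e \<subseteq> I"
    using infinite_countable_subset assms(7) by blast
  define j where "j n m = e (prod_encode (n,m))" for n m
  have jI: "range (j n) \<subseteq> I" for n using eI by (auto simp: j_def)
  have jinj: "j n m = j n' m' \<Longrightarrow> n = n' \<and> m = m'" for n m n' m'
  proof -
    assume "j n m = j n' m'"
    then have "prod_encode (n,m) = prod_encode (n',m')" using einj unfolding j_def by (meson injD)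
    then show ?thesis by (simp add: prod_encode_eq)
  qed
  define cyl where "cyl n c = {x \<in> topspace T. (\<lambda>m. x (j n m)) \<in> c}" for n c
  define Fam where "Fam n = {W \<times> (box xs \<inter> cyl n (g (W,xs))) | W xs. (W,xs) \<in> Idx \<and> (\<forall>m. j n m \<notin> fst ` set xs)}" for n
  have Copen: "\<And>c. c \<in> C \<Longrightarrow> openin (product_topology (\<lambda>_::nat. Y) UNIV) c \<and> c \<noteq> {}"
    using Ccell by (auto simp: cellular_def)
  have Cdisj: "\<And>c c'. c \<in> C \<Longrightarrow> c' \<in> C \<Longrightarrow> c \<noteq> c' \<Longrightarrow> c \<inter> c' = {}"
    using Ccell by (auto simp: cellular_def pairwise_def disjnt_def)
  have PYopen: "\<forall>q\<in>PY. openin Y q" using PYb by (auto simp: pi_base_def)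
  have elem: "openin (prod_topology X T) (W \<times> (box xs \<inter> cyl n (g (W,xs)))) \<and> W \<times> (box xs \<inter> cyl n (g (W,xs))) \<noteq> {}"
    if "(W,xs) \<in> Idx" "\<forall>m. j n m \<notin> fst ` set xs" for W xs n
  proof -
    have W: "W \<in> PX" and xs: "xs \<in> lists (I \<times> PY)" and bne: "box xs \<noteq> {}" using that by (auto simp: Idx_def)
    have gc: "g (W,xs) \<in> C" using gC that by auto
    have oW: "openin X W" "W \<noteq> {}" using W PXb by (auto simp: pi_base_def)
    have ob: "openin T (box xs)" unfolding box_def T_def
      by (rule box_open[OF _ PYopen]) (use xs in auto)
    have oc: "openin T (cyl n (g (W,xs)))" unfolding cyl_def T_def
      by (rule cyl_open[OF jI]) (use Copen gc in auto)
    obtain c where c: "c \<in> g (W,xs)" using Copen gc by blast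
    have ctop: "c m \<in> topspace Y" for m
      using openin_subset[of "product_topology (\<lambda>_::nat. Y) UNIV" "g (W,xs)"] Copen[OF gc] c by auto
    obtain x0 where x0: "x0 \<in> box xs" using bne by blast
    define x where "x i = (if i \<in> range (j n) then c (SOME m. j n m = i) else x0 i)" for i
    have xj: "x (j n m) = c m" for m
    proof -
      have "(SOME m'. j n m' = j n m) = m" by (rule some_equality) (auto dest: jinj)
      then show ?thesis by (simp add: x_def)
    qed
    have x0T: "x0 \<in> topspace T" using x0 by (auto simp: box_def)
    have "x \<in> topspace T"
      using x0T jI ctop unfolding T_def by (auto simp: x_def PiE_iff extensional_def)
    moreover have "\<forall>(i,q)\<in>set xs. x i \<in> q"
    proof (clarify)
      fix i q assume iq: "(i,q) \<in> set xs"
      then have "i \<notin> range (j n)" using that(2) by force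
      then show "x i \<in> q" using x0 iq by (auto simp: x_def box_def)
    qed
    moreover have "(\<lambda>m. x (j n m)) \<in> g (W,xs)" using c xj by simp
    ultimately have "x \<in> box xs \<inter> cyl n (g (W,xs))" by (auto simp: box_def cyl_def)
    then show ?thesis using oW ob oc by (auto simp: openin_prod_Times_iff openin_Int)
  qed
  define P where "P = (\<Union>n. Fam n)"
  have "pi_base (prod_topology X T) P"
    unfolding pi_base_def
  proof (intro conjI allI impI ballI)
    fix B assume "B \<in> P"
    then show "openin (prod_topology X T) B" "B \<noteq> {}"
      unfolding P_def Fam_def using elem by auto
  next
    fix U assume U: "openin (prod_topology X T) U \<and> U \<noteq> {}"
    then obtain a y where ay: "(a,y) \<in> U" by auto
    then obtain U1 V where U1: "openin X U1" "openin T V" "a \<in> U1" "y \<in> V" "U1 \<times> V \<subseteq> U"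
      using U openin_prod_topology_alt by metis
    obtain W where W: "W \<in> PX" "W \<subseteq> U1" using PXb U1 unfolding pi_base_def by blast
    obtain U' where U': "finite {i \<in> I. U' i \<noteq> topspace Y}" "\<forall>i\<in>I. openin Y (U' i)"
      "y \<in> Pi\<^sub>E I U'" "Pi\<^sub>E I U' \<subseteq> V"
      using U1(2,4) unfolding T_def openin_product_topology_alt by blast
    define S where "S = {i \<in> I. U' i \<noteq> topspace Y}"
    have "\<exists>q. q \<in> PY \<and> q \<subseteq> U' i" if "i \<in> S" for i
    proof -
      have "y i \<in> U' i" "openin Y (U' i)" using U' that by (auto simp: S_def)
      then show ?thesis using PYb unfolding pi_base_def by blast
    qed
    then obtain Pq where Pq: "\<And>i. i \<in> S \<Longrightarrow> Pq i \<in> PY \<and> Pq i \<subseteq> U' i" by metis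
    obtain ys where ys: "set ys = S" using U'(1) finite_list S_def by metis
    define xs where "xs = map (\<lambda>i. (i, Pq i)) ys"
    have setxs: "set xs = (\<lambda>i. (i, Pq i)) ` S" using ys by (simp add: xs_def)
    have boxsub: "box xs \<subseteq> Pi\<^sub>E I U'"
    proof
      fix x assume x: "x \<in> box xs"
      then have xT: "x \<in> Pi\<^sub>E I (\<lambda>_. topspace Y)" by (simp add: box_def T_def)
      show "x \<in> Pi\<^sub>E I U'"
      proof (unfold PiE_iff, intro conjI ballI)
        fix i assume i: "i \<in> I"
        show "x i \<in> U' i"
        proof (cases "i \<in> S")
          case True
          then have "(i, Pq i) \<in> set xs" using setxs by auto
          then have "x i \<in> Pq i" using x by (auto simp: box_def)
          then show ?thesis using Pq True by auto
        next
          case False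
          then show ?thesis using xT i by (auto simp: S_def PiE_iff)
        qed
      qed (use xT in \<open>auto simp: PiE_iff\<close>)
    qed
    have Pqne: "Pq i \<noteq> {}" if "i \<in> S" for i
      using Pq[OF that] PYb unfolding pi_base_def by blast
    define x where "x i = (if i \<in> I then (if i \<in> S then (SOME p. p \<in> Pq i) else y i) else undefined)" for i
    have "x \<in> box xs"
    proof -
      have ySi: "i \<in> S \<Longrightarrow> (SOME p. p \<in> Pq i) \<in> Pq i" for i using Pqne by (metis ex_in_conv some_in_eq)
      have PYtop: "q \<in> PY \<Longrightarrow> q \<subseteq> topspace Y" for q using PYopen openin_subset by blast
      have "x i \<in> topspace Y" if "i \<in> I" for i
      proof (cases "i \<in> S")
        case True
        then show ?thesis using ySi[OF True] Pq[OF True] PYtop by (auto simp: x_def that)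
      next
        case False
        have "y i \<in> U' i" using U'(3) that by (auto simp: PiE_iff)
        moreover have "U' i \<subseteq> topspace Y" using U'(2) that openin_subset by blast
        ultimately show ?thesis using False that by (auto simp: x_def)
      qed
      then have "x \<in> topspace T" unfolding T_def by (auto simp: PiE_iff x_def extensional_def)
      moreover have "\<forall>(i,q)\<in>set xs. x i \<in> q"
        using setxs ySi S_def by (auto simp: x_def)
      ultimately show ?thesis by (simp add: box_def)
    qed
    then have bne: "box xs \<noteq> {}" by blast
    have "set xs \<subseteq> I \<times> PY"
    proof
      fix p assume "p \<in> set xs"
      then obtain i where "i \<in> S" "p = (i, Pq i)" using setxs by auto
      then show "p \<in> I \<times> PY" using Pq[of i] by (auto simp: S_def)
    qed
    then have xsl: "xs \<in> lists (I \<times> PY)" by auto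
    have idx: "(W, xs) \<in> Idx" using W xsl bne by (simp add: Idx_def)
    have finbad: "finite {n. \<exists>m. j n m \<in> fst ` set xs}"
    proof -
      have "{n. \<exists>m. j n m \<in> fst ` set xs} \<subseteq> (\<lambda>k. fst (prod_decode k)) ` (e -` (fst ` set xs))"
      proof
        fix n assume "n \<in> {n. \<exists>m. j n m \<in> fst ` set xs}"
        then obtain m where "e (prod_encode (n,m)) \<in> fst ` set xs" by (auto simp: j_def)
        then show "n \<in> (\<lambda>k. fst (prod_decode k)) ` (e -` (fst ` set xs))"
          by (intro image_eqI[of _ _ "prod_encode (n,m)"]) auto
      qed
      moreover have "finite (e -` (fst ` set xs))" using einj by (simp add: finite_vimageI)
      ultimately show ?thesis using finite_subset by blast
    qed
    obtain n where n: "n \<notin> {n. \<exists>m. j n m \<in> fst ` set xs}"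
      using finbad by (meson ex_new_if_finite infinite_UNIV_nat)
    have "W \<times> (box xs \<inter> cyl n (g (W,xs))) \<in> P"
      unfolding P_def Fam_def using idx n by blast
    moreover have "W \<times> (box xs \<inter> cyl n (g (W,xs))) \<subseteq> U"
      using W U1 boxsub U'(4) by blast
    ultimately show "\<exists>B\<in>P. B \<subseteq> U" by blast
  qed
  moreover have "sigma_disjoint P"
    unfolding sigma_disjoint_def
  proof (intro exI[of _ Fam] conjI allI)
    show "P = (\<Union>n. Fam n)" by (simp add: P_def)
  next
    fix n
    show "pairwise disjnt (Fam n)"
    proof (unfold pairwise_def, intro ballI impI)
      fix A B assume A: "A \<in> Fam n" and B: "B \<in> Fam n" and AB: "A \<noteq> B"
      obtain W xs where Aeq: "A = W \<times> (box xs \<inter> cyl n (g (W,xs)))" and i1: "(W,xs) \<in> Idx"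
        using A unfolding Fam_def by blast
      obtain W' xs' where Beq: "B = W' \<times> (box xs' \<inter> cyl n (g (W',xs')))" and i2: "(W',xs') \<in> Idx"
        using B unfolding Fam_def by blast
      have "(W,xs) \<noteq> (W',xs')" using AB Aeq Beq by auto
      then have "g (W,xs) \<noteq> g (W',xs')" using ginj i1 i2 by (meson inj_on_def)
      then have "g (W,xs) \<inter> g (W',xs') = {}" using Cdisj gC i1 i2 by auto
      then have "cyl n (g (W,xs)) \<inter> cyl n (g (W',xs')) = {}" by (auto simp: cyl_def)
      then show "disjnt A B" using Aeq Beq by (auto simp: disjnt_def)
    qed
  qed
  ultimately show ?thesis unfolding T_def by blast
qed

end
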